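(* Let $(X,I,T)$ be a relative monad and $(S,S_0)$ a monad compatible with $I$ in a 2-category $\mathcal{K}$, and let $\hat T$ be a lifting of $T$ to the algebras of $(S,S_0)$. Let $\widehat{m_0}\colon STS_0\Rightarrow TS_0$ be the $S$-algebra structure of $\hat T(S_0,m_0)$, where $(S_0,m_0)$ is regarded as an $X_0$-indexed $S_0$-algebra. Then $$d:=\widehat{m_0}\cdot STs_0\colon ST\Rightarrow TS_0$$ is a relative distributive law of $T$ over $(S,S_0)$.
   Context: Conventions: 1-cells compose by juxtaposition; vertical composition of 2-cells is written $\cdot$; whiskering by juxtaposition. Relative monad: a relative monad $(X,I,T)$ in $\mathcal{K}$ consists of objects $X_0,X$, 1-cells $I,T\colon X_0\to X$, an operator $(-)^\dagger\colon[I,T]\to[T,T]$ (extension: for every span $A,B\colon O\to X_0$ a function sending 2-cells $IA\Rightarrow TB$ to 2-cells $TA\Rightarrow TB$, natural in $O$, $A$ and $B$) and a 2-cell $t\colon I\Rightarrow T$ such that $k^\dagger\cdot tA=k$, $(tA)^\dagger=1_{TA}$, $(l^\dagger\cdot k)^\dagger=l^\dagger\cdot k^\dagger$ for all $k\colon IA\Rightarrow TB$, $l\colon IB\Rightarrow TC$. Monad compatible with $I\colon X_0\to X$: a pair $(S,S_0)$ of monads $(X,S,m,s)$ and $(X_0,S_0,m_0,s_0)$ in $\mathcal{K}$ with $SI=IS_0$, $mI=Im_0$, $sI=Is_0$. Relative distributive law: a 2-cell $d\colon ST\Rightarrow TS_0$ such that (D1) $d\cdot mT=Tm_0\cdot dS_0\cdot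 Sd$; (D2) $d\cdot sT=Ts_0$; (D3) for all $A,B\colon O\to X_0$ and $f\colon IA\Rightarrow TB$, $dB\cdot S(f^\dagger)=(dB\cdot Sf)^\dagger\cdot dA$ (here $dB\cdot Sf\colon IS_0A=SIA\Rightarrow TS_0B$); (D4) $d\cdot St=tS_0$ as 2-cells $SI=IS_0\Rightarrow TS_0$. Indexed algebras: for a monad $(X,S,m,s)$ and object $K$, $S\text{-}\mathrm{Alg}(K)$ is the category whose objects are pairs $(M,\mu)$ with $M\colon K\to X$, $\mu\colon SM\Rightarrow M$, $\mu\cdot sM=1_M$, $\mu\cdot S\mu=\mu\cdot mM$, and whose morphisms $(M,\mu)\to(N,\nu)$ are 2-cells $f\colon M\Rightarrow N$ with $f\cdot\mu=\nu\cdot Sf$; this gives a 2-functor $S\text{-}\mathrm{Alg}(-)\colon\mathcal{K}^{op}\to\mathbf{Cat}$ by precomposition. Lifting to algebras: a lifting of $T$ to the algebras of $(S,S_0)$ is a 2-natural transformation $\hat T\colon S_0\text{-}\mathrm{Alg}(-)\to S\text{-}\mathrm{Alg}(-)$ of the form $\hat T(M,\mu)=(TM,\hat T\mu)$ on objects and $\hat T(f)=Tf$ on morphisms, carrying the relative monad structure over $I_*\colon(M,\mu)\mapsto(IM,I\mu)$ whose unit and extension are those of $T$, which means precisely: (a) for all $K$-indexed $S_0$-algebras $(M,\mu),(N,\nu)$ and every 2-cell $f\colon IM\Rightarrow TN$ with $f\cdot I\mu=\hat T\nu\cdot Sf$, one has $f^\dagger\cdot\hat T\mu=\hat T\nu\cdot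 Sf^\dagger$; (b) for every $(M,\mu)$, $tM\cdot I\mu=\hat T\mu\cdot StM$. *)

theory Defs
  imports Main
begin

text \<open>A strict 2-category with objects of type 'o, 1-cells of type 'a and 2-cells of type 'c.
  cmp g f is the composite "g f" (first f, then g), matching juxtaposition.
  vcmp b a is vertical composition "b . a" (first a, then b).
  hcmp b a is horizontal composition "b a" (first a, then b in the 1-cell direction).\<close>

record ('o, 'a, 'c) twocat =
  obs  :: "'o set"
  arr1 :: "'a set"
  arr2 :: "'c set"
  dom1 :: "'a \<Rightarrow> 'o"
  cod1 :: "'a \<Rightarrow> 'o"
  idn  :: "'o \<Rightarrow> 'a"
  cmp  :: "'a \<Rightarrow> 'a \<Rightarrow> 'a"
  src2 :: "'c \<Rightarrow> 'a"
  tgt2 :: "'c \<Rightarrow> 'a"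
  id2  :: "'a \<Rightarrow> 'c"
  vcmp :: "'c \<Rightarrow> 'c \<Rightarrow> 'c"
  hcmp :: "'c \<Rightarrow> 'c \<Rightarrow> 'c"

definition hom1 :: "('o,'a,'c,'e) twocat_scheme \<Rightarrow> 'a \<Rightarrow> 'o \<Rightarrow> 'o \<Rightarrow> bool" where
  "hom1 C f x y \<longleftrightarrow> f \<in> arr1 C \<and> dom1 C f = x \<and> cod1 C f = y"

definition hom2 :: "('o,'a,'c,'e) twocat_scheme \<Rightarrow> 'c \<Rightarrow> 'a \<Rightarrow> 'a \<Rightarrow> bool" where
  "hom2 C \<alpha> f g \<longleftrightarrow> \<alpha> \<in> arr2 C \<and> src2 C \<alpha> = f \<and> tgt2 C \<alpha> = g"

text \<open>Whiskering: wl C F a is "F a", wr C a F is "a F".\<close>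
definition wl :: "('o,'a,'c,'e) twocat_scheme \<Rightarrow> 'a \<Rightarrow> 'c \<Rightarrow> 'c" where
  "wl C F \<alpha> = hcmp C (id2 C F) \<alpha>"

definition wr :: "('o,'a,'c,'e) twocat_scheme \<Rightarrow> 'c \<Rightarrow> 'a \<Rightarrow> 'c" where
  "wr C \<alpha> F = hcmp C \<alpha> (id2 C F)"

definition two_category :: "('o,'a,'c,'e) twocat_scheme \<Rightarrow> bool" where
  "two_category C \<longleftrightarrow>
     \<comment> \<open>1-cells form a category\<close>
     (\<forall>f \<in> arr1 C. dom1 C f \<in> obs C \<and> cod1 C f \<in> obs C) \<and>
     (\<forall>x \<in> obs C. hom1 C (idn C x) x x) \<and>
     (\<forall>f \<in> arr1 C. \<forall>g \<in> arr1 C. dom1 C g = cod1 C f \<longrightarrow>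
        hom1 C (cmp C g f) (dom1 C f) (cod1 C g)) \<and>
     (\<forall>f \<in> arr1 C. \<forall>g \<in> arr1 C. \<forall>h \<in> arr1 C. dom1 C g = cod1 C f \<longrightarrow> dom1 C h = cod1 C g \<longrightarrow>
        cmp C (cmp C h g) f = cmp C h (cmp C g f)) \<and>
     (\<forall>f \<in> arr1 C. cmp C (idn C (cod1 C f)) f = f \<and> cmp C f (idn C (dom1 C f)) = f) \<and>
     \<comment> \<open>2-cells: well-typedness\<close>
     (\<forall>\<alpha> \<in> arr2 C. src2 C \<alpha> \<in> arr1 C \<and> tgt2 C \<alpha> \<in> arr1 C \<and>
        dom1 C (src2 C \<alpha>) = dom1 C (tgt2 C \<alpha>) \<and> cod1 C (src2 C \<alpha>) = cod1 C (tgt2 C \<alpha>)) \<and>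
     (\<forall>f \<in> arr1 C. hom2 C (id2 C f) f f) \<and>
     \<comment> \<open>vertical composition\<close>
     (\<forall>\<alpha> \<in> arr2 C. \<forall>\<beta> \<in> arr2 C. src2 C \<beta> = tgt2 C \<alpha> \<longrightarrow>
        hom2 C (vcmp C \<beta> \<alpha>) (src2 C \<alpha>) (tgt2 C \<beta>)) \<and>
     (\<forall>\<alpha> \<in> arr2 C. \<forall>\<beta> \<in> arr2 C. \<forall>\<gamma> \<in> arr2 C. src2 C \<beta> = tgt2 C \<alpha> \<longrightarrow> src2 C \<gamma> = tgt2 C \<beta> \<longrightarrow>
        vcmp C (vcmp C \<gamma> \<beta>) \<alpha> = vcmp C \<gamma> (vcmp C \<beta> \<alpha>)) \<and>
     (\<forall>\<alpha> \<in> arr2 C. vcmp C (id2 C (tgt2 C \<alpha>)) \<alpha> = \<alpha> \<and> vcmp C \<alpha> (id2 C (src2 C \<alpha>)) = \<alpha>) \<and>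
     \<comment> \<open>horizontal composition\<close>
     (\<forall>\<alpha> \<in> arr2 C. \<forall>\<beta> \<in> arr2 C. dom1 C (src2 C \<beta>) = cod1 C (src2 C \<alpha>) \<longrightarrow>
        hom2 C (hcmp C \<beta> \<alpha>) (cmp C (src2 C \<beta>) (src2 C \<alpha>)) (cmp C (tgt2 C \<beta>) (tgt2 C \<alpha>))) \<and>
     (\<forall>\<alpha> \<in> arr2 C. \<forall>\<beta> \<in> arr2 C. \<forall>\<gamma> \<in> arr2 C.
        dom1 C (src2 C \<beta>) = cod1 C (src2 C \<alpha>) \<longrightarrow> dom1 C (src2 C \<gamma>) = cod1 C (src2 C \<beta>) \<longrightarrow>
        hcmp C (hcmp C \<gamma> \<beta>) \<alpha> = hcmp C \<gamma> (hcmp C \<beta> \<alpha>)) \<and>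
     (\<forall>\<alpha> \<in> arr2 C. hcmp C (id2 C (idn C (cod1 C (src2 C \<alpha>)))) \<alpha> = \<alpha> \<and>
                    hcmp C \<alpha> (id2 C (idn C (dom1 C (src2 C \<alpha>)))) = \<alpha>) \<and>
     (\<forall>f \<in> arr1 C. \<forall>g \<in> arr1 C. dom1 C g = cod1 C f \<longrightarrow>
        hcmp C (id2 C g) (id2 C f) = id2 C (cmp C g f)) \<and>
     \<comment> \<open>interchange law\<close>
     (\<forall>\<alpha> \<in> arr2 C. \<forall>\<alpha>' \<in> arr2 C. \<forall>\<beta> \<in> arr2 C. \<forall>\<beta>' \<in> arr2 C.
        src2 C \<alpha>' = tgt2 C \<alpha> \<longrightarrow> src2 C \<beta>' = tgt2 C \<beta> \<longrightarrow> dom1 C (src2 C \<beta>) = cod1 C (src2 C \<alpha>) \<longrightarrow>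
        hcmp C (vcmp C \<beta>' \<beta>) (vcmp C \<alpha>' \<alpha>) = vcmp C (hcmp C \<beta>' \<alpha>') (hcmp C \<beta> \<alpha>))"

text \<open>ext A B f is the extension f^dagger of a 2-cell f : I A => T B, for a span A, B : Ob -> X0.\<close>

definition relative_monad ::
  "('o,'a,'c,'e) twocat_scheme \<Rightarrow> 'o \<Rightarrow> 'o \<Rightarrow> 'a \<Rightarrow> 'a \<Rightarrow> ('a \<Rightarrow> 'a \<Rightarrow> 'c \<Rightarrow> 'c) \<Rightarrow> 'c \<Rightarrow> bool" where
  "relative_monad C X0 X I T ext t \<longleftrightarrow>
     X0 \<in> obs C \<and> X \<in> obs C \<and> hom1 C I X0 X \<and> hom1 C T X0 X \<and> hom2 C t I T \<and>
     \<comment> \<open>typing of the extension operator\<close>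
     (\<forall>Ob A B f. hom1 C A Ob X0 \<longrightarrow> hom1 C B Ob X0 \<longrightarrow> hom2 C f (cmp C I A) (cmp C T B) \<longrightarrow>
        hom2 C (ext A B f) (cmp C T A) (cmp C T B)) \<and>
     \<comment> \<open>naturality in Ob\<close>
     (\<forall>Ob Ob' A B f G. hom1 C A Ob X0 \<longrightarrow> hom1 C B Ob X0 \<longrightarrow> hom2 C f (cmp C I A) (cmp C T B) \<longrightarrow>
        hom1 C G Ob' Ob \<longrightarrow>
        ext (cmp C A G) (cmp C B G) (wr C f G) = wr C (ext A B f) G) \<and>
     \<comment> \<open>naturality in A\<close>
     (\<forall>Ob A A' B f \<alpha>. hom1 C A Ob X0 \<longrightarrow> hom1 C A' Ob X0 \<longrightarrow> hom1 C B Ob X0 \<longrightarrow>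
        hom2 C f (cmp C I A) (cmp C T B) \<longrightarrow> hom2 C \<alpha> A' A \<longrightarrow>
        ext A' B (vcmp C f (wl C I \<alpha>)) = vcmp C (ext A B f) (wl C T \<alpha>)) \<and>
     \<comment> \<open>naturality in B\<close>
     (\<forall>Ob A B B' f \<beta>. hom1 C A Ob X0 \<longrightarrow> hom1 C B Ob X0 \<longrightarrow> hom1 C B' Ob X0 \<longrightarrow>
        hom2 C f (cmp C I A) (cmp C T B) \<longrightarrow> hom2 C \<beta> B B' \<longrightarrow>
        ext A B' (vcmp C (wl C T \<beta>) f) = vcmp C (wl C T \<beta>) (ext A B f)) \<and>
     \<comment> \<open>relative monad laws\<close>
     (\<forall>Ob A B k. hom1 C A Ob X0 \<longrightarrow> hom1 C B Ob X0 \<longrightarrow> hom2 C k (cmp C I A) (cmp C T B) \<longrightarrow>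
        vcmp C (ext A B k) (wr C t A) = k) \<and>
     (\<forall>Ob A. hom1 C A Ob X0 \<longrightarrow> ext A A (wr C t A) = id2 C (cmp C T A)) \<and>
     (\<forall>Ob A B D k l. hom1 C A Ob X0 \<longrightarrow> hom1 C B Ob X0 \<longrightarrow> hom1 C D Ob X0 \<longrightarrow>
        hom2 C k (cmp C I A) (cmp C T B) \<longrightarrow> hom2 C l (cmp C I B) (cmp C T D) \<longrightarrow>
        ext A D (vcmp C (ext B D l) k) = vcmp C (ext B D l) (ext A B k))"

definition monad2 :: "('o,'a,'c,'e) twocat_scheme \<Rightarrow> 'o \<Rightarrow> 'a \<Rightarrow> 'c \<Rightarrow> 'c \<Rightarrow> bool" where
  "monad2 C X S m s \<longleftrightarrow>
     X \<in> obs C \<and> hom1 C S X X \<and> hom2 C m (cmp C S S) S \<and> hom2 C s (idn C X) S \<and>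
     vcmp C m (wr C m S) = vcmp C m (wl C S m) \<and>
     vcmp C m (wr C s S) = id2 C S \<and>
     vcmp C m (wl C S s) = id2 C S"

definition compatible_monad ::
  "('o,'a,'c,'e) twocat_scheme \<Rightarrow> 'o \<Rightarrow> 'o \<Rightarrow> 'a \<Rightarrow> 'a \<Rightarrow> 'c \<Rightarrow> 'c \<Rightarrow> 'a \<Rightarrow> 'c \<Rightarrow> 'c \<Rightarrow> bool" where
  "compatible_monad C X0 X I S m s S0 m0 s0 \<longleftrightarrow>
     monad2 C X S m s \<and> monad2 C X0 S0 m0 s0 \<and>
     cmp C S I = cmp C I S0 \<and> wr C m I = wl C I m0 \<and> wr C s I = wl C I s0"

definition ialg :: "('o,'a,'c,'e) twocat_scheme \<Rightarrow> 'o \<Rightarrow> 'a \<Rightarrow> 'c \<Rightarrow> 'c \<Rightarrow> 'a \<Rightarrow> 'c \<Rightarrow> bool" where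
  "ialg C X S m s M \<mu> \<longleftrightarrow>
     M \<in> arr1 C \<and> cod1 C M = X \<and> hom2 C \<mu> (cmp C S M) M \<and>
     vcmp C \<mu> (wr C s M) = id2 C M \<and>
     vcmp C \<mu> (wl C S \<mu>) = vcmp C \<mu> (wr C m M)"

text \<open>hatT M mu is the S-algebra structure of hatT(M,mu) = (T M, hatT M mu).\<close>

definition lifting ::
  "('o,'a,'c,'e) twocat_scheme \<Rightarrow> 'o \<Rightarrow> 'o \<Rightarrow> 'a \<Rightarrow> 'a \<Rightarrow> ('a \<Rightarrow> 'a \<Rightarrow> 'c \<Rightarrow> 'c) \<Rightarrow> 'c \<Rightarrow>
   'a \<Rightarrow> 'c \<Rightarrow> 'c \<Rightarrow> 'a \<Rightarrow> 'c \<Rightarrow> 'c \<Rightarrow> ('a \<Rightarrow> 'c \<Rightarrow> 'c) \<Rightarrow> bool" where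
  "lifting C X0 X I T ext t S m s S0 m0 s0 hatT \<longleftrightarrow>
     \<comment> \<open>on objects: S0-algebras go to S-algebras (T M, hatT M mu)\<close>
     (\<forall>M \<mu>. ialg C X0 S0 m0 s0 M \<mu> \<longrightarrow> ialg C X S m s (cmp C T M) (hatT M \<mu>)) \<and>
     \<comment> \<open>on morphisms: f goes to T f\<close>
     (\<forall>M \<mu> N \<nu> f. ialg C X0 S0 m0 s0 M \<mu> \<longrightarrow> ialg C X0 S0 m0 s0 N \<nu> \<longrightarrow> dom1 C M = dom1 C N \<longrightarrow>
        hom2 C f M N \<longrightarrow> vcmp C f \<mu> = vcmp C \<nu> (wl C S0 f) \<longrightarrow>
        vcmp C (wl C T f) (hatT M \<mu>) = vcmp C (hatT N \<nu>) (wl C S (wl C T f))) \<and>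
     \<comment> \<open>2-naturality (in the indexing object K)\<close>
     (\<forall>M \<mu> A K'. ialg C X0 S0 m0 s0 M \<mu> \<longrightarrow> hom1 C A K' (dom1 C M) \<longrightarrow>
        hatT (cmp C M A) (wr C \<mu> A) = wr C (hatT M \<mu>) A) \<and>
     \<comment> \<open>(a) extension lifts\<close>
     (\<forall>M \<mu> N \<nu> f. ialg C X0 S0 m0 s0 M \<mu> \<longrightarrow> ialg C X0 S0 m0 s0 N \<nu> \<longrightarrow> dom1 C M = dom1 C N \<longrightarrow>
        hom2 C f (cmp C I M) (cmp C T N) \<longrightarrow>
        vcmp C f (wl C I \<mu>) = vcmp C (hatT N \<nu>) (wl C S f) \<longrightarrow>
        vcmp C (ext M N f) (hatT M \<mu>) = vcmp C (hatT N \<nu>) (wl C S (ext M N f))) \<and>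
     \<comment> \<open>(b) unit lifts\<close>
     (\<forall>M \<mu>. ialg C X0 S0 m0 s0 M \<mu> \<longrightarrow>
        vcmp C (wr C t M) (wl C I \<mu>) = vcmp C (hatT M \<mu>) (wl C S (wr C t M)))"

definition rel_distributive_law ::
  "('o,'a,'c,'e) twocat_scheme \<Rightarrow> 'o \<Rightarrow> 'o \<Rightarrow> 'a \<Rightarrow> 'a \<Rightarrow> ('a \<Rightarrow> 'a \<Rightarrow> 'c \<Rightarrow> 'c) \<Rightarrow> 'c \<Rightarrow>
   'a \<Rightarrow> 'c \<Rightarrow> 'c \<Rightarrow> 'a \<Rightarrow> 'c \<Rightarrow> 'c \<Rightarrow> 'c \<Rightarrow> bool" where
  "rel_distributive_law C X0 X I T ext t S m s S0 m0 s0 d \<longleftrightarrow>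
     hom2 C d (cmp C S T) (cmp C T S0) \<and>
     \<comment> \<open>(D1)\<close>
     vcmp C d (wr C m T) = vcmp C (wl C T m0) (vcmp C (wr C d S0) (wl C S d)) \<and>
     \<comment> \<open>(D2)\<close>
     vcmp C d (wr C s T) = wl C T s0 \<and>
     \<comment> \<open>(D3)\<close>
     (\<forall>Ob A B f. hom1 C A Ob X0 \<longrightarrow> hom1 C B Ob X0 \<longrightarrow> hom2 C f (cmp C I A) (cmp C T B) \<longrightarrow>
        vcmp C (wr C d B) (wl C S (ext A B f)) =
        vcmp C (ext (cmp C S0 A) (cmp C S0 B) (vcmp C (wr C d B) (wl C S f))) (wr C d A)) \<and>
     \<comment> \<open>(D4)\<close>
     vcmp C d (wl C S t) = wr C t S0"

end

theory Submission
  imports Defs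
begin


locale tc = fixes C :: "('o,'a,'c,'e) twocat_scheme"
  assumes c1: "(\<forall>f \<in> arr1 C. dom1 C f \<in> obs C \<and> cod1 C f \<in> obs C)"
  and c2: "(\<forall>x \<in> obs C. hom1 C (idn C x) x x)"
  and c3: "(\<forall>f \<in> arr1 C. \<forall>g \<in> arr1 C. dom1 C g = cod1 C f \<longrightarrow>
        hom1 C (cmp C g f) (dom1 C f) (cod1 C g))"
  and c4: "(\<forall>f \<in> arr1 C. \<forall>g \<in> arr1 C. \<forall>h \<in> arr1 C. dom1 C g = cod1 C f \<longrightarrow> dom1 C h = cod1 C g \<longrightarrow>
        cmp C (cmp C h g) f = cmp C h (cmp C g f))"
  and c5: "(\<forall>f \<in> arr1 C. cmp C (idn C (cod1 C f)) f = f \<and> cmp C f (idn C (dom1 C f)) = f)"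
  and c6: "(\<forall>\<alpha> \<in> arr2 C. src2 C \<alpha> \<in> arr1 C \<and> tgt2 C \<alpha> \<in> arr1 C \<and>
        dom1 C (src2 C \<alpha>) = dom1 C (tgt2 C \<alpha>) \<and> cod1 C (src2 C \<alpha>) = cod1 C (tgt2 C \<alpha>))"
  and c7: "(\<forall>f \<in> arr1 C. hom2 C (id2 C f) f f)"
  and c8: "(\<forall>\<alpha> \<in> arr2 C. \<forall>\<beta> \<in> arr2 C. src2 C \<beta> = tgt2 C \<alpha> \<longrightarrow>
        hom2 C (vcmp C \<beta> \<alpha>) (src2 C \<alpha>) (tgt2 C \<beta>))"
  and c9: "(\<forall>\<alpha> \<in> arr2 C. \<forall>\<beta> \<in> arr2 C. \<forall>\<gamma> \<in> arr2 C. src2 C \<beta> = tgt2 C \<alpha> \<longrightarrow> src2 C \<gamma> = tgt2 C \<beta> \<longrightarrow>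
        vcmp C (vcmp C \<gamma> \<beta>) \<alpha> = vcmp C \<gamma> (vcmp C \<beta> \<alpha>))"
  and c10: "(\<forall>\<alpha> \<in> arr2 C. vcmp C (id2 C (tgt2 C \<alpha>)) \<alpha> = \<alpha> \<and> vcmp C \<alpha> (id2 C (src2 C \<alpha>)) = \<alpha>)"
  and c11: "(\<forall>\<alpha> \<in> arr2 C. \<forall>\<beta> \<in> arr2 C. dom1 C (src2 C \<beta>) = cod1 C (src2 C \<alpha>) \<longrightarrow>
        hom2 C (hcmp C \<beta> \<alpha>) (cmp C (src2 C \<beta>) (src2 C \<alpha>)) (cmp C (tgt2 C \<beta>) (tgt2 C \<alpha>)))"
  and c12: "(\<forall>\<alpha> \<in> arr2 C. \<forall>\<beta> \<in> arr2 C. \<forall>\<gamma> \<in> arr2 C.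
        dom1 C (src2 C \<beta>) = cod1 C (src2 C \<alpha>) \<longrightarrow> dom1 C (src2 C \<gamma>) = cod1 C (src2 C \<beta>) \<longrightarrow>
        hcmp C (hcmp C \<gamma> \<beta>) \<alpha> = hcmp C \<gamma> (hcmp C \<beta> \<alpha>))"
  and c13: "(\<forall>\<alpha> \<in> arr2 C. hcmp C (id2 C (idn C (cod1 C (src2 C \<alpha>)))) \<alpha> = \<alpha> \<and>
                    hcmp C \<alpha> (id2 C (idn C (dom1 C (src2 C \<alpha>)))) = \<alpha>)"
  and c14: "(\<forall>f \<in> arr1 C. \<forall>g \<in> arr1 C. dom1 C g = cod1 C f \<longrightarrow>
        hcmp C (id2 C g) (id2 C f) = id2 C (cmp C g f))"
  and c15: "(\<forall>\<alpha> \<in> arr2 C. \<forall>\<alpha>' \<in> arr2 C. \<forall>\<beta> \<in> arr2 C. \<forall>\<beta>' \<in> arr2 C.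
        src2 C \<alpha>' = tgt2 C \<alpha> \<longrightarrow> src2 C \<beta>' = tgt2 C \<beta> \<longrightarrow> dom1 C (src2 C \<beta>) = cod1 C (src2 C \<alpha>) \<longrightarrow>
        hcmp C (vcmp C \<beta>' \<beta>) (vcmp C \<alpha>' \<alpha>) = vcmp C (hcmp C \<beta>' \<alpha>') (hcmp C \<beta> \<alpha>))"
begin

lemma obs_arr1[simp]: "f \<in> arr1 C \<Longrightarrow> dom1 C f \<in> obs C" "f \<in> arr1 C \<Longrightarrow> cod1 C f \<in> obs C"
  using c1 by auto

lemma idn_ty[simp]: "x \<in> obs C \<Longrightarrow> idn C x \<in> arr1 C"
  "x \<in> obs C \<Longrightarrow> dom1 C (idn C x) = x" "x \<in> obs C \<Longrightarrow> cod1 C (idn C x) = x"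
  using c2 unfolding hom1_def by blast+

lemma cmp_ty[simp]:
  "f \<in> arr1 C \<Longrightarrow> g \<in> arr1 C \<Longrightarrow> dom1 C g = cod1 C f \<Longrightarrow> cmp C g f \<in> arr1 C"
  "f \<in> arr1 C \<Longrightarrow> g \<in> arr1 C \<Longrightarrow> dom1 C g = cod1 C f \<Longrightarrow> dom1 C (cmp C g f) = dom1 C f"
  "f \<in> arr1 C \<Longrightarrow> g \<in> arr1 C \<Longrightarrow> dom1 C g = cod1 C f \<Longrightarrow> cod1 C (cmp C g f) = cod1 C g"
  using c3 unfolding hom1_def by blast+

lemma cmp_assoc[simp]:
  "f \<in> arr1 C \<Longrightarrow> g \<in> arr1 C \<Longrightarrow> h \<in> arr1 C \<Longrightarrow> dom1 C g = cod1 C f \<Longrightarrow> dom1 C h = cod1 C g \<Longrightarrow>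
   cmp C (cmp C h g) f = cmp C h (cmp C g f)"
  using c4 by blast

lemma cmp_idn[simp]:
  "f \<in> arr1 C \<Longrightarrow> cod1 C f = y \<Longrightarrow> cmp C (idn C y) f = f"
  "f \<in> arr1 C \<Longrightarrow> dom1 C f = x \<Longrightarrow> cmp C f (idn C x) = f"
  using c5 by blast+

lemma arr2_ty[simp]: "a \<in> arr2 C \<Longrightarrow> src2 C a \<in> arr1 C"
  "a \<in> arr2 C \<Longrightarrow> tgt2 C a \<in> arr1 C"
  using c6 by blast+

lemma arr2_dc: "a \<in> arr2 C \<Longrightarrow> dom1 C (tgt2 C a) = dom1 C (src2 C a)"
  "a \<in> arr2 C \<Longrightarrow> cod1 C (tgt2 C a) = cod1 C (src2 C a)"
  using c6 by auto

lemma id2_ty[simp]: "f \<in> arr1 C \<Longrightarrow> id2 C f \<in> arr2 C"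
  "f \<in> arr1 C \<Longrightarrow> src2 C (id2 C f) = f" "f \<in> arr1 C \<Longrightarrow> tgt2 C (id2 C f) = f"
  using c7 unfolding hom2_def by blast+

lemma vcmp_ty[simp]:
  "a \<in> arr2 C \<Longrightarrow> b \<in> arr2 C \<Longrightarrow> src2 C b = tgt2 C a \<Longrightarrow> vcmp C b a \<in> arr2 C"
  "a \<in> arr2 C \<Longrightarrow> b \<in> arr2 C \<Longrightarrow> src2 C b = tgt2 C a \<Longrightarrow> src2 C (vcmp C b a) = src2 C a"
  "a \<in> arr2 C \<Longrightarrow> b \<in> arr2 C \<Longrightarrow> src2 C b = tgt2 C a \<Longrightarrow> tgt2 C (vcmp C b a) = tgt2 C b"
  using c8 unfolding hom2_def by blast+

lemma vcmp_assoc: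
  "a \<in> arr2 C \<Longrightarrow> b \<in> arr2 C \<Longrightarrow> c \<in> arr2 C \<Longrightarrow> src2 C b = tgt2 C a \<Longrightarrow> src2 C c = tgt2 C b \<Longrightarrow>
   vcmp C (vcmp C c b) a = vcmp C c (vcmp C b a)"
  using c9 by blast

lemma vcmp_id[simp]:
  "a \<in> arr2 C \<Longrightarrow> tgt2 C a = g \<Longrightarrow> vcmp C (id2 C g) a = a"
  "a \<in> arr2 C \<Longrightarrow> src2 C a = f \<Longrightarrow> vcmp C a (id2 C f) = a"
  using c10 by blast+

lemma hcmp_ty[simp]:
  "a \<in> arr2 C \<Longrightarrow> b \<in> arr2 C \<Longrightarrow> dom1 C (src2 C b) = cod1 C (src2 C a) \<Longrightarrow> hcmp C b a \<in> arr2 C"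
  "a \<in> arr2 C \<Longrightarrow> b \<in> arr2 C \<Longrightarrow> dom1 C (src2 C b) = cod1 C (src2 C a) \<Longrightarrow> src2 C (hcmp C b a) = cmp C (src2 C b) (src2 C a)"
  "a \<in> arr2 C \<Longrightarrow> b \<in> arr2 C \<Longrightarrow> dom1 C (src2 C b) = cod1 C (src2 C a) \<Longrightarrow> tgt2 C (hcmp C b a) = cmp C (tgt2 C b) (tgt2 C a)"
  using c11 unfolding hom2_def by blast+

lemma hcmp_assoc:
  "a \<in> arr2 C \<Longrightarrow> b \<in> arr2 C \<Longrightarrow> c \<in> arr2 C \<Longrightarrow> dom1 C (src2 C b) = cod1 C (src2 C a) \<Longrightarrow>
   dom1 C (src2 C c) = cod1 C (src2 C b) \<Longrightarrow> hcmp C (hcmp C c b) a = hcmp C c (hcmp C b a)"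
  using c12 by blast

lemma hcmp_idn:
  "a \<in> arr2 C \<Longrightarrow> hcmp C (id2 C (idn C (cod1 C (src2 C a)))) a = a"
  "a \<in> arr2 C \<Longrightarrow> hcmp C a (id2 C (idn C (dom1 C (src2 C a)))) = a"
  using c13 by blast+

lemma hcmp_id2:
  "f \<in> arr1 C \<Longrightarrow> g \<in> arr1 C \<Longrightarrow> dom1 C g = cod1 C f \<Longrightarrow> hcmp C (id2 C g) (id2 C f) = id2 C (cmp C g f)"
  using c14 by blast

lemma interchange:
  "a \<in> arr2 C \<Longrightarrow> a' \<in> arr2 C \<Longrightarrow> b \<in> arr2 C \<Longrightarrow> b' \<in> arr2 C \<Longrightarrow>
   src2 C a' = tgt2 C a \<Longrightarrow> src2 C b' = tgt2 C b \<Longrightarrow> dom1 C (src2 C b) = cod1 C (src2 C a) \<Longrightarrow>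
   hcmp C (vcmp C b' b) (vcmp C a' a) = vcmp C (hcmp C b' a') (hcmp C b a)"
  using c15 by blast

lemma tgt_dc[simp]: "a \<in> arr2 C \<Longrightarrow> dom1 C (tgt2 C a) = dom1 C (src2 C a)"
  "a \<in> arr2 C \<Longrightarrow> cod1 C (tgt2 C a) = cod1 C (src2 C a)"
  by (simp_all add: arr2_dc)

lemma wl_ty[simp]:
  "F \<in> arr1 C \<Longrightarrow> a \<in> arr2 C \<Longrightarrow> dom1 C F = cod1 C (src2 C a) \<Longrightarrow> wl C F a \<in> arr2 C"
  "F \<in> arr1 C \<Longrightarrow> a \<in> arr2 C \<Longrightarrow> dom1 C F = cod1 C (src2 C a) \<Longrightarrow> src2 C (wl C F a) = cmp C F (src2 C a)"
  "F \<in> arr1 C \<Longrightarrow> a \<in> arr2 C \<Longrightarrow> dom1 C F = cod1 C (src2 C a) \<Longrightarrow> tgt2 C (wl C F a) = cmp C F (tgt2 C a)"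
  unfolding wl_def by simp_all

lemma wr_ty[simp]:
  "F \<in> arr1 C \<Longrightarrow> a \<in> arr2 C \<Longrightarrow> dom1 C (src2 C a) = cod1 C F \<Longrightarrow> wr C a F \<in> arr2 C"
  "F \<in> arr1 C \<Longrightarrow> a \<in> arr2 C \<Longrightarrow> dom1 C (src2 C a) = cod1 C F \<Longrightarrow> src2 C (wr C a F) = cmp C (src2 C a) F"
  "F \<in> arr1 C \<Longrightarrow> a \<in> arr2 C \<Longrightarrow> dom1 C (src2 C a) = cod1 C F \<Longrightarrow> tgt2 C (wr C a F) = cmp C (tgt2 C a) F"
  unfolding wr_def by simp_all

lemma wl_vcmp:
  "F \<in> arr1 C \<Longrightarrow> a \<in> arr2 C \<Longrightarrow> b \<in> arr2 C \<Longrightarrow> src2 C b = tgt2 C a \<Longrightarrow> dom1 C F = cod1 C (src2 C a) \<Longrightarrow>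
   wl C F (vcmp C b a) = vcmp C (wl C F b) (wl C F a)"
  unfolding wl_def
  using interchange[of a b "id2 C F" "id2 C F"] by simp

lemma wr_vcmp:
  "F \<in> arr1 C \<Longrightarrow> a \<in> arr2 C \<Longrightarrow> b \<in> arr2 C \<Longrightarrow> src2 C b = tgt2 C a \<Longrightarrow> dom1 C (src2 C a) = cod1 C F \<Longrightarrow>
   wr C (vcmp C b a) F = vcmp C (wr C b F) (wr C a F)"
  unfolding wr_def
  using interchange[of "id2 C F" "id2 C F" a b] by simp

lemma wl_wl:
  "F \<in> arr1 C \<Longrightarrow> G \<in> arr1 C \<Longrightarrow> a \<in> arr2 C \<Longrightarrow> dom1 C F = cod1 C G \<Longrightarrow> dom1 C G = cod1 C (src2 C a) \<Longrightarrow>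
   wl C F (wl C G a) = wl C (cmp C F G) a"
  unfolding wl_def
  using hcmp_assoc[of a "id2 C G" "id2 C F"] hcmp_id2[of G F] by simp

lemma wr_wr:
  "F \<in> arr1 C \<Longrightarrow> G \<in> arr1 C \<Longrightarrow> a \<in> arr2 C \<Longrightarrow> dom1 C G = cod1 C F \<Longrightarrow> dom1 C (src2 C a) = cod1 C G \<Longrightarrow>
   wr C (wr C a G) F = wr C a (cmp C G F)"
  unfolding wr_def
  using hcmp_assoc[of "id2 C F" "id2 C G" a] hcmp_id2[of F G] by simp

lemma wl_wr:
  "F \<in> arr1 C \<Longrightarrow> G \<in> arr1 C \<Longrightarrow> a \<in> arr2 C \<Longrightarrow> dom1 C F = cod1 C (src2 C a) \<Longrightarrow> dom1 C (src2 C a) = cod1 C G \<Longrightarrow>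
   wl C F (wr C a G) = wr C (wl C F a) G"
  unfolding wl_def wr_def
  using hcmp_assoc[of "id2 C G" a "id2 C F"] by simp

lemma wl_id2[simp]:
  "F \<in> arr1 C \<Longrightarrow> g \<in> arr1 C \<Longrightarrow> dom1 C F = cod1 C g \<Longrightarrow> wl C F (id2 C g) = id2 C (cmp C F g)"
  unfolding wl_def by (simp add: hcmp_id2)

lemma wr_id2[simp]:
  "F \<in> arr1 C \<Longrightarrow> g \<in> arr1 C \<Longrightarrow> dom1 C g = cod1 C F \<Longrightarrow> wr C (id2 C g) F = id2 C (cmp C g F)"
  unfolding wr_def by (simp add: hcmp_id2)

lemma wl_idn[simp]:
  "a \<in> arr2 C \<Longrightarrow> y = cod1 C (src2 C a) \<Longrightarrow> wl C (idn C y) a = a"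
  unfolding wl_def using hcmp_idn by simp

lemma wr_idn[simp]:
  "a \<in> arr2 C \<Longrightarrow> x = dom1 C (src2 C a) \<Longrightarrow> wr C a (idn C x) = a"
  unfolding wr_def using hcmp_idn by simp

lemma natur:
  "a \<in> arr2 C \<Longrightarrow> b \<in> arr2 C \<Longrightarrow> dom1 C (src2 C b) = cod1 C (src2 C a) \<Longrightarrow>
   vcmp C (wr C b (tgt2 C a)) (wl C (src2 C b) a) = vcmp C (wl C (tgt2 C b) a) (wr C b (src2 C a))"
proof -
  assume A: "a \<in> arr2 C" "b \<in> arr2 C" "dom1 C (src2 C b) = cod1 C (src2 C a)"
  have "hcmp C b a = hcmp C (vcmp C b (id2 C (src2 C b))) (vcmp C (id2 C (tgt2 C a)) a)"
    using A by simp
  also have "\<dots> = vcmp C (wr C b (tgt2 C a)) (wl C (src2 C b) a)"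
    using A by (subst interchange) (simp_all add: wl_def wr_def)
  finally have 1: "hcmp C b a = vcmp C (wr C b (tgt2 C a)) (wl C (src2 C b) a)" .
  have "hcmp C b a = hcmp C (vcmp C (id2 C (tgt2 C b)) b) (vcmp C a (id2 C (src2 C a)))"
    using A by simp
  also have "\<dots> = vcmp C (wl C (tgt2 C b) a) (wr C b (src2 C a))"
    using A by (subst interchange) (simp_all add: wl_def wr_def)
  finally show ?thesis using 1 by simp
qed

lemma ialg_wr:
  assumes "ialg C X S m s M \<mu>" "S \<in> arr1 C" "m \<in> arr2 C" "s \<in> arr2 C"
    "A \<in> arr1 C" "cod1 C A = dom1 C M"
    "src2 C s = idn C X" "tgt2 C s = S" "src2 C m = cmp C S S" "tgt2 C m = S" "dom1 C S = X" "cod1 C S = X"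
  shows "ialg C X S m s (cmp C M A) (wr C \<mu> A)"
proof -
  have M: "M \<in> arr1 C" "cod1 C M = X" "\<mu> \<in> arr2 C" "src2 C \<mu> = cmp C S M" "tgt2 C \<mu> = M"
    and u: "vcmp C \<mu> (wr C s M) = id2 C M" and a: "vcmp C \<mu> (wl C S \<mu>) = vcmp C \<mu> (wr C m M)"
    using assms(1) unfolding ialg_def hom2_def by auto
  note ty = M assms(2-)
  have X: "X \<in> obs C" using ty by (metis obs_arr1(2))
  have 1: "vcmp C (wr C \<mu> A) (wr C s (cmp C M A)) = id2 C (cmp C M A)"
  proof -
    have "wr C s (cmp C M A) = wr C (wr C s M) A" using ty X by (simp add: wr_wr)
    hence "vcmp C (wr C \<mu> A) (wr C s (cmp C M A)) = wr C (vcmp C \<mu> (wr C s M)) A"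
      using ty X by (simp add: wr_vcmp)
    thus ?thesis using u ty by simp
  qed
  have 2: "vcmp C (wr C \<mu> A) (wl C S (wr C \<mu> A)) = vcmp C (wr C \<mu> A) (wr C m (cmp C M A))"
  proof -
    have "wr C m (cmp C M A) = wr C (wr C m M) A" using ty X by (simp add: wr_wr)
    hence e1: "vcmp C (wr C \<mu> A) (wr C m (cmp C M A)) = wr C (vcmp C \<mu> (wr C m M)) A"
      using ty X by (simp add: wr_vcmp)
    have "wl C S (wr C \<mu> A) = wr C (wl C S \<mu>) A" using ty X by (simp add: wl_wr)
    hence "vcmp C (wr C \<mu> A) (wl C S (wr C \<mu> A)) = wr C (vcmp C \<mu> (wl C S \<mu>)) A"
      using ty X by (simp add: wr_vcmp)
    thus ?thesis using e1 a by simp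
  qed
  show ?thesis unfolding ialg_def hom2_def using ty X 1 2 by simp
qed

end

lemma tcI: "two_category C \<Longrightarrow> tc C"
  unfolding two_category_def tc_def by (elim conjE) (intro conjI; assumption)



context tc begin

lemma main:
  assumes RM: "relative_monad C X0 X I T ext t"
    and CM: "compatible_monad C X0 X I S m s S0 m0 s0"
    and LF: "lifting C X0 X I T ext t S m s S0 m0 s0 hatT"
  shows "rel_distributive_law C X0 X I T ext t S m s S0 m0 s0
           (vcmp C (hatT S0 m0) (wl C (cmp C S T) s0))"
proof -
  have X0: "X0 \<in> obs C" and Xo: "X \<in> obs C" and Ity: "I \<in> arr1 C" "dom1 C I = X0" "cod1 C I = X"
    and Tty: "T \<in> arr1 C" "dom1 C T = X0" "cod1 C T = X"
    and tty: "t \<in> arr2 C" "src2 C t = I" "tgt2 C t = T"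
    using RM unfolding relative_monad_def hom1_def hom2_def by auto
  note RMq = RM[unfolded relative_monad_def]
  have Sty: "S \<in> arr1 C" "dom1 C S = X" "cod1 C S = X"
    and mty: "m \<in> arr2 C" "src2 C m = cmp C S S" "tgt2 C m = S"
    and sty: "s \<in> arr2 C" "src2 C s = idn C X" "tgt2 C s = S"
    and mass: "vcmp C m (wr C m S) = vcmp C m (wl C S m)"
    and mu1: "vcmp C m (wr C s S) = id2 C S" and mu2: "vcmp C m (wl C S s) = id2 C S"
    and S0ty: "S0 \<in> arr1 C" "dom1 C S0 = X0" "cod1 C S0 = X0"
    and m0ty: "m0 \<in> arr2 C" "src2 C m0 = cmp C S0 S0" "tgt2 C m0 = S0"
    and s0ty: "s0 \<in> arr2 C" "src2 C s0 = idn C X0" "tgt2 C s0 = S0"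
    and m0ass: "vcmp C m0 (wr C m0 S0) = vcmp C m0 (wl C S0 m0)"
    and m0u1: "vcmp C m0 (wr C s0 S0) = id2 C S0" and m0u2: "vcmp C m0 (wl C S0 s0) = id2 C S0"
    and SI: "cmp C S I = cmp C I S0" and mI: "wr C m I = wl C I m0" and sI: "wr C s I = wl C I s0"
    using CM unfolding compatible_monad_def monad2_def hom1_def hom2_def by auto
  have SIA[simp]: "cmp C S (cmp C I A) = cmp C I (cmp C S0 A)" if "A \<in> arr1 C" "cod1 C A = X0" for A
    using that Sty Ity S0ty SI by (metis cmp_assoc)
  note LFq = LF[unfolded lifting_def]
  note ty = X0 Xo Ity Tty tty Sty mty sty S0ty m0ty s0ty SI
  define h where "h = hatT S0 m0"
  have alg0: "ialg C X0 S0 m0 s0 S0 m0"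
    unfolding ialg_def hom2_def using ty m0ass m0u1 by auto
  have halg: "ialg C X S m s (cmp C T S0) h" using LFq alg0 h_def by blast
  have hty: "h \<in> arr2 C" "src2 C h = cmp C S (cmp C T S0)" "tgt2 C h = cmp C T S0"
    and hunit: "vcmp C h (wr C s (cmp C T S0)) = id2 C (cmp C T S0)"
    and hass: "vcmp C h (wl C S h) = vcmp C h (wr C m (cmp C T S0))"
    using halg unfolding ialg_def hom2_def by auto
  note ty = ty hty
  define \<alpha> where "\<alpha> = wl C T s0"
  have \<alpha>ty: "\<alpha> \<in> arr2 C" "src2 C \<alpha> = T" "tgt2 C \<alpha> = cmp C T S0"
    unfolding \<alpha>_def using ty by auto
  note ty = ty \<alpha>ty
  define d where "d = vcmp C h (wl C (cmp C S T) s0)"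
  have d2: "d = vcmp C h (wl C S \<alpha>)"
    unfolding d_def \<alpha>_def using ty by (simp add: wl_wl)
  have dty: "d \<in> arr2 C" "src2 C d = cmp C S T" "tgt2 C d = cmp C T S0"
    unfolding d2 using ty by auto
  note ty = ty dty
  have D2: "vcmp C d (wr C s T) = \<alpha>"
  proof -
    have n: "vcmp C (wr C s (cmp C T S0)) \<alpha> = vcmp C (wl C S \<alpha>) (wr C s T)"
      using natur[of \<alpha> s] ty by simp
    have "vcmp C d (wr C s T) = vcmp C h (vcmp C (wl C S \<alpha>) (wr C s T))"
      unfolding d2 using ty by (simp add: vcmp_assoc)
    also have "\<dots> = vcmp C (vcmp C h (wr C s (cmp C T S0))) \<alpha>"
      unfolding n[symmetric] using ty by (simp add: vcmp_assoc)
    also have "\<dots> = \<alpha>" using ty hunit by simp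
    finally show ?thesis .
  qed
  have SIs[simp]: "cmp C S I = cmp C I S0" using SI .
  note LFq = LF[unfolded lifting_def]
  have Lb: "vcmp C (wr C t S0) (wl C I m0) = vcmp C h (wl C S (wr C t S0))"
    using LFq alg0 h_def by blast
  have algA: "ialg C X0 S0 m0 s0 (cmp C S0 A) (wr C m0 A)" if "A \<in> arr1 C" "cod1 C A = X0" for A
    using ialg_wr[OF alg0, of A] that ty by simp
  have D4: "vcmp C d (wl C S t) = wr C t S0"
  proof -
    have n1: "vcmp C (wr C t S0) (wl C I s0) = vcmp C \<alpha> t"
      using natur[of s0 t] ty unfolding \<alpha>_def by simp
    have e: "wl C S (wl C I s0) = wl C I (wl C S0 s0)" using ty by (simp add: wl_wl)
    have "vcmp C d (wl C S t) = vcmp C h (vcmp C (wl C S \<alpha>) (wl C S t))"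
      unfolding d2 using ty by (simp add: vcmp_assoc)
    also have "\<dots> = vcmp C h (wl C S (vcmp C (wr C t S0) (wl C I s0)))"
      unfolding n1 using ty by (simp add: wl_vcmp)
    also have "\<dots> = vcmp C (vcmp C h (wl C S (wr C t S0))) (wl C S (wl C I s0))"
      using ty by (simp add: wl_vcmp vcmp_assoc)
    also have "\<dots> = vcmp C (wr C t S0) (vcmp C (wl C I m0) (wl C I (wl C S0 s0)))"
      unfolding Lb[symmetric] e using ty by (simp add: vcmp_assoc)
    also have "\<dots> = vcmp C (wr C t S0) (wl C I (vcmp C m0 (wl C S0 s0)))"
      using ty by (simp add: wl_vcmp)
    also have "\<dots> = wr C t S0" using ty m0u2 by simp
    finally show ?thesis .
  qed
  have D1a: "vcmp C d (wr C m T) = vcmp C h (wl C S d)"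
  proof -
    have n2: "vcmp C (wr C m (cmp C T S0)) (wl C (cmp C S S) \<alpha>) = vcmp C (wl C S \<alpha>) (wr C m T)"
      using natur[of \<alpha> m] ty by simp
    have "vcmp C d (wr C m T) = vcmp C h (vcmp C (wl C S \<alpha>) (wr C m T))"
      unfolding d2 using ty by (simp add: vcmp_assoc)
    also have "\<dots> = vcmp C (vcmp C h (wr C m (cmp C T S0))) (wl C (cmp C S S) \<alpha>)"
      unfolding n2[symmetric] using ty by (simp add: vcmp_assoc)
    also have "\<dots> = vcmp C (vcmp C h (wl C S h)) (wl C S (wl C S \<alpha>))"
      unfolding hass using ty by (simp add: wl_wl)
    also have "\<dots> = vcmp C h (wl C S d)"
      unfolding d2 using ty by (simp add: vcmp_assoc wl_vcmp)
    finally show ?thesis .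
  qed
  have D1: "vcmp C d (wr C m T) = vcmp C (wl C T m0) (vcmp C (wr C d S0) (wl C S d))"
  proof -
    have hS0: "wr C h S0 = hatT (cmp C S0 S0) (wr C m0 S0)"
      using LFq alg0 h_def ty unfolding hom1_def by metis
    have L2: "vcmp C (wl C T m0) (hatT (cmp C S0 S0) (wr C m0 S0)) = vcmp C h (wl C S (wl C T m0))"
      using LFq algA[of S0] alg0 h_def ty m0ass unfolding hom2_def by simp
    have wd: "wr C d S0 = vcmp C (wr C h S0) (wl C S (wl C T (wr C s0 S0)))"
      unfolding d2 \<alpha>_def using ty by (simp add: wr_vcmp wl_wr)
    have i: "vcmp C (wl C S (wl C T m0)) (wl C S (wl C T (wr C s0 S0))) = id2 C (cmp C S (cmp C T S0))"
    proof -
      have "vcmp C (wl C S (wl C T m0)) (wl C S (wl C T (wr C s0 S0))) = wl C S (wl C T (vcmp C m0 (wr C s0 S0)))"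
        using ty by (simp add: wl_vcmp)
      thus ?thesis using m0u1 ty by simp
    qed
    have "vcmp C (wl C T m0) (vcmp C (wr C d S0) (wl C S d))
        = vcmp C (vcmp C (wl C T m0) (wr C h S0)) (vcmp C (wl C S (wl C T (wr C s0 S0))) (wl C S d))"
      unfolding wd using ty by (simp add: vcmp_assoc)
    also have "\<dots> = vcmp C h (vcmp C (vcmp C (wl C S (wl C T m0)) (wl C S (wl C T (wr C s0 S0)))) (wl C S d))"
      unfolding hS0 L2 using ty by (simp add: vcmp_assoc)
    also have "\<dots> = vcmp C h (wl C S d)" unfolding i using ty by simp
    finally show ?thesis using D1a by simp
  qed
  have ext_ty: "\<And>Ob A B f. hom1 C A Ob X0 \<Longrightarrow> hom1 C B Ob X0 \<Longrightarrow> hom2 C f (cmp C I A) (cmp C T B) \<Longrightarrow>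
        hom2 C (ext A B f) (cmp C T A) (cmp C T B)"
    using RM unfolding relative_monad_def by (elim conjE) blast
  have natA: "\<And>Ob A A' B f a. hom1 C A Ob X0 \<Longrightarrow> hom1 C A' Ob X0 \<Longrightarrow> hom1 C B Ob X0 \<Longrightarrow>
        hom2 C f (cmp C I A) (cmp C T B) \<Longrightarrow> hom2 C a A' A \<Longrightarrow>
        ext A' B (vcmp C f (wl C I a)) = vcmp C (ext A B f) (wl C T a)"
    using RM unfolding relative_monad_def by (elim conjE) blast
  have natB: "\<And>Ob A B B' f b. hom1 C A Ob X0 \<Longrightarrow> hom1 C B Ob X0 \<Longrightarrow> hom1 C B' Ob X0 \<Longrightarrow>
        hom2 C f (cmp C I A) (cmp C T B) \<Longrightarrow> hom2 C b B B' \<Longrightarrow>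
        ext A B' (vcmp C (wl C T b) f) = vcmp C (wl C T b) (ext A B f)"
  proof -
    have "\<forall>Ob A B B' f b. hom1 C A Ob X0 \<longrightarrow> hom1 C B Ob X0 \<longrightarrow> hom1 C B' Ob X0 \<longrightarrow>
        hom2 C f (cmp C I A) (cmp C T B) \<longrightarrow> hom2 C b B B' \<longrightarrow>
        ext A B' (vcmp C (wl C T b) f) = vcmp C (wl C T b) (ext A B f)"
      using RM unfolding relative_monad_def by (elim conjE) assumption
    thus "\<And>Ob A B B' f b. hom1 C A Ob X0 \<Longrightarrow> hom1 C B Ob X0 \<Longrightarrow> hom1 C B' Ob X0 \<Longrightarrow>
        hom2 C f (cmp C I A) (cmp C T B) \<Longrightarrow> hom2 C b B B' \<Longrightarrow>
        ext A B' (vcmp C (wl C T b) f) = vcmp C (wl C T b) (ext A B f)" by blast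
  qed
  have La: "\<And>M \<mu> N \<nu> f. ialg C X0 S0 m0 s0 M \<mu> \<Longrightarrow> ialg C X0 S0 m0 s0 N \<nu> \<Longrightarrow> dom1 C M = dom1 C N \<Longrightarrow>
        hom2 C f (cmp C I M) (cmp C T N) \<Longrightarrow>
        vcmp C f (wl C I \<mu>) = vcmp C (hatT N \<nu>) (wl C S f) \<Longrightarrow>
        vcmp C (ext M N f) (hatT M \<mu>) = vcmp C (hatT N \<nu>) (wl C S (ext M N f))"
    using LFq by blast
  have hA: "wr C h A = hatT (cmp C S0 A) (wr C m0 A)" if "A \<in> arr1 C" "cod1 C A = X0" for A
    using LFq alg0 h_def ty that unfolding hom1_def by metis
  have HAty: "hatT (cmp C S0 A) (wr C m0 A) \<in> arr2 C"
     "src2 C (hatT (cmp C S0 A) (wr C m0 A)) = cmp C S (cmp C T (cmp C S0 A))"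
     "tgt2 C (hatT (cmp C S0 A) (wr C m0 A)) = cmp C T (cmp C S0 A)"
    if "A \<in> arr1 C" "cod1 C A = X0" for A
    using hA[OF that, symmetric] ty that by simp_all
  have dA: "wr C d A = vcmp C (hatT (cmp C S0 A) (wr C m0 A)) (wl C S (wl C T (wr C s0 A)))"
    if "A \<in> arr1 C" "cod1 C A = X0" for A
    unfolding d2 \<alpha>_def hA[OF that, symmetric] using ty that by (simp add: wr_vcmp wl_wr)
  have D3: "vcmp C (wr C d B) (wl C S (ext A B f)) =
        vcmp C (ext (cmp C S0 A) (cmp C S0 B) (vcmp C (wr C d B) (wl C S f))) (wr C d A)"
    if H: "hom1 C A Ob X0" "hom1 C B Ob X0" "hom2 C f (cmp C I A) (cmp C T B)" for Ob A B f
  proof -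
    have Aty: "A \<in> arr1 C" "dom1 C A = Ob" "cod1 C A = X0" and Bty: "B \<in> arr1 C" "dom1 C B = Ob" "cod1 C B = X0"
      and fty: "f \<in> arr2 C" "src2 C f = cmp C I A" "tgt2 C f = cmp C T B"
      using H unfolding hom1_def hom2_def by auto
    note ty = ty Aty Bty fty HAty[OF Aty(1,3)] HAty[OF Bty(1,3)]
    define HA where "HA = hatT (cmp C S0 A) (wr C m0 A)"
    define HB where "HB = hatT (cmp C S0 B) (wr C m0 B)"
    define g where "g = vcmp C (wr C d B) (wl C S f)"
    have dA': "wr C d A = vcmp C HA (wl C S (wl C T (wr C s0 A)))" using dA Aty HA_def by simp
    have dB': "wr C d B = vcmp C HB (wl C S (wl C T (wr C s0 B)))" using dA Bty HB_def by simp
    note ty = ty[folded HA_def HB_def]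
    have wdB: "wr C d B \<in> arr2 C" "src2 C (wr C d B) = cmp C S (cmp C T B)"
       "tgt2 C (wr C d B) = cmp C T (cmp C S0 B)" using ty by simp_all
    have gty: "g \<in> arr2 C" "src2 C g = cmp C I (cmp C S0 A)" "tgt2 C g = cmp C T (cmp C S0 B)"
      unfolding g_def using ty wdB by simp_all
    note ty = ty wdB gty
    have H1: "hom1 C (cmp C S0 A) Ob X0" "hom1 C (cmp C S0 B) Ob X0"
      using ty unfolding hom1_def by simp_all
    have sA: "hom2 C (wr C s0 A) A (cmp C S0 A)" "hom2 C (wr C s0 B) B (cmp C S0 B)"
      using ty unfolding hom2_def by simp_all
    have ghom: "hom2 C g (cmp C I (cmp C S0 A)) (cmp C T (cmp C S0 B))"
      using ty unfolding hom2_def by simp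
    have fhom: "hom2 C (vcmp C (wl C T (wr C s0 B)) f) (cmp C I A) (cmp C T (cmp C S0 B))"
      using ty unfolding hom2_def by simp
    have K1: "vcmp C g (wl C I (wr C s0 A)) = vcmp C (wl C T (wr C s0 B)) f"
    proof -
      have e1: "wl C I (wr C s0 A) = wr C s (cmp C I A)"
        using ty sI[symmetric] by (simp add: wl_wr wr_wr)
      have n: "vcmp C (wr C s (cmp C T B)) f = vcmp C (wl C S f) (wr C s (cmp C I A))"
        using natur[of f s] ty by simp
      have e2: "vcmp C (wr C d B) (wr C s (cmp C T B)) = wl C T (wr C s0 B)"
      proof -
        have "wr C s (cmp C T B) = wr C (wr C s T) B" using ty by (simp add: wr_wr)
        hence "vcmp C (wr C d B) (wr C s (cmp C T B)) = wr C (vcmp C d (wr C s T)) B"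
          using ty by (simp add: wr_vcmp)
        thus ?thesis unfolding D2 \<alpha>_def using ty by (simp add: wl_wr)
      qed
      have "vcmp C g (wl C I (wr C s0 A)) = vcmp C (wr C d B) (vcmp C (wl C S f) (wr C s (cmp C I A)))"
        unfolding g_def e1 using ty by (simp add: vcmp_assoc)
      also have "\<dots> = vcmp C (vcmp C (wr C d B) (wr C s (cmp C T B))) f"
        unfolding n[symmetric] using ty by (simp add: vcmp_assoc)
      finally show ?thesis unfolding e2 .
    qed
    have K2: "vcmp C g (wl C I (wr C m0 A)) = vcmp C HB (wl C S g)"
    proof -
      have e1: "wl C I (wr C m0 A) = wr C m (cmp C I A)"
        using ty mI[symmetric] by (simp add: wl_wr wr_wr)
      have n: "vcmp C (wr C m (cmp C T B)) (wl C (cmp C S S) f) = vcmp C (wl C S f) (wr C m (cmp C I A))"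
        using natur[of f m] ty by simp
      have e2: "vcmp C (wr C d B) (wr C m (cmp C T B)) = vcmp C HB (wl C S (wr C d B))"
      proof -
        have "wr C m (cmp C T B) = wr C (wr C m T) B" using ty by (simp add: wr_wr)
        hence "vcmp C (wr C d B) (wr C m (cmp C T B)) = wr C (vcmp C d (wr C m T)) B"
          using ty by (simp add: wr_vcmp)
        also have "\<dots> = vcmp C (wr C h B) (wr C (wl C S d) B)"
          unfolding D1a using ty by (simp add: wr_vcmp)
        also have "\<dots> = vcmp C HB (wl C S (wr C d B))"
          unfolding hA[OF Bty(1,3)] HB_def[symmetric] using ty by (simp add: wl_wr)
        finally show ?thesis .
      qed
      have "vcmp C g (wl C I (wr C m0 A)) = vcmp C (wr C d B) (vcmp C (wl C S f) (wr C m (cmp C I A)))"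
        unfolding g_def e1 using ty by (simp add: vcmp_assoc)
      also have "\<dots> = vcmp C (vcmp C (wr C d B) (wr C m (cmp C T B))) (wl C S (wl C S f))"
        unfolding n[symmetric] using ty by (simp add: vcmp_assoc wl_wl)
      also have "\<dots> = vcmp C HB (vcmp C (wl C S (wr C d B)) (wl C S (wl C S f)))"
        unfolding e2 using ty by (simp add: vcmp_assoc)
      also have "\<dots> = vcmp C HB (wl C S g)"
        unfolding g_def using ty by (simp add: wl_vcmp)
      finally show ?thesis .
    qed
    have LA: "vcmp C (ext (cmp C S0 A) (cmp C S0 B) g) HA = vcmp C HB (wl C S (ext (cmp C S0 A) (cmp C S0 B) g))"
      unfolding HA_def HB_def
      using La[OF algA[OF Aty(1,3)] algA[OF Bty(1,3)] _ ghom] K2[unfolded HB_def] ty by simp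
    have eg: "ext (cmp C S0 A) (cmp C S0 B) g \<in> arr2 C"
      "src2 C (ext (cmp C S0 A) (cmp C S0 B) g) = cmp C T (cmp C S0 A)"
      "tgt2 C (ext (cmp C S0 A) (cmp C S0 B) g) = cmp C T (cmp C S0 B)"
      using ext_ty[OF H1 ghom] unfolding hom2_def by auto
    have ef: "ext A B f \<in> arr2 C" "src2 C (ext A B f) = cmp C T A" "tgt2 C (ext A B f) = cmp C T B"
      using ext_ty[OF H(1,2,3)] unfolding hom2_def by auto
    note ty = ty eg ef
    have "vcmp C (wr C d B) (wl C S (ext A B f))
        = vcmp C HB (wl C S (vcmp C (wl C T (wr C s0 B)) (ext A B f)))"
      unfolding dB' using ty by (simp add: vcmp_assoc wl_vcmp)
    also have "\<dots> = vcmp C HB (wl C S (ext A (cmp C S0 B) (vcmp C g (wl C I (wr C s0 A)))))"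
      unfolding K1 natB[OF H(1,2) H1(2) H(3) sA(2)] ..
    also have "\<dots> = vcmp C HB (wl C S (vcmp C (ext (cmp C S0 A) (cmp C S0 B) g) (wl C T (wr C s0 A))))"
      unfolding natA[OF H1(1) H(1) H1(2) ghom sA(1)] ..
    also have "\<dots> = vcmp C (vcmp C HB (wl C S (ext (cmp C S0 A) (cmp C S0 B) g))) (wl C S (wl C T (wr C s0 A)))"
      using ty by (simp add: vcmp_assoc wl_vcmp)
    also have "\<dots> = vcmp C (ext (cmp C S0 A) (cmp C S0 B) g) (wr C d A)"
      unfolding LA[symmetric] dA' using ty by (simp add: vcmp_assoc)
    finally show ?thesis unfolding g_def .
  qed
  have dty': "hom2 C d (cmp C S T) (cmp C T S0)" using dty unfolding hom2_def by simp
  have "rel_distributive_law C X0 X I T ext t S m s S0 m0 s0 d"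
    unfolding rel_distributive_law_def
    using dty' D1 D2[unfolded \<alpha>_def] D4 D3 by blast
  thus ?thesis unfolding d_def h_def .
qed

end

theorem mainTheorem11:
  fixes C :: "('o, 'a, 'c) twocat"
  assumes "two_category C"
    and "relative_monad C X0 X I T ext t"
    and "compatible_monad C X0 X I S m s S0 m0 s0"
    and "lifting C X0 X I T ext t S m s S0 m0 s0 hatT"
  shows "rel_distributive_law C X0 X I T ext t S m s S0 m0 s0
           (vcmp C (hatT S0 m0) (wl C (cmp C S T) s0))"
  using tc.main[OF tcI[OF assms(1)] assms(2-4)] .

end
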